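(* Let $(X,\Sigma)$ be a measurable space, $(\mathcal{E}_t)_{t\ge0}$ a process of pavings, $\mathscr{A}=\{\mathsf{A}_t(\cdot|E)\colon E\in\mathcal{E}_t,\,t\ge0\}$ a parametric family of conditional aggregation operators, $f\in\mathbf{F}$ and $\boldsymbol{\mu}=(\mu_t)_{t\ge0}$ a family of monotone measures on $\Sigma$. Then: (a) for fixed $t\ge0$, $\boldsymbol{\mu}_{\mathscr{A}}(f,t)=0$ if and only if $\mu_t(E)=0$ for every $E\in\mathcal{E}_t^0$ such that $\mathsf{A}_t(f|E)\ge t$; (b) if $\mathsf{A}_t(\lambda\mathbf{1}_X|E)\le\lambda$ for every $E\in\mathcal{E}_t^0$ and all $t,\lambda\ge0$, then there exists $b>0$ such that $\boldsymbol{\mu}_{\mathscr{A}}(f,t)=0$ for each $t>b$.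
   Context: $\Sigma^0=\Sigma\setminus\{\emptyset\}$. $\mathbf{F}$ denotes the set of all $\Sigma$-measurable, nonnegative, bounded functions $f\colon X\to[0,\infty)$. A monotone measure is a map $\mu\colon\Sigma\to[0,\infty]$ with $\mu(B)\le\mu(C)$ whenever $B\subseteq C$, $\mu(\emptyset)=0$ and $\mu(X)>0$. For $E\in\Sigma^0$, a conditional aggregation operator (CAO) w.r.t. $E$ is a map $\mathsf{A}(\cdot|E)\colon\mathbf{F}\to[0,\infty]$ such that (C1) $\mathsf{A}(f|E)\le\mathsf{A}(g|E)$ whenever $f(x)\le g(x)$ for all $x\in E$, and (C2) $\mathsf{A}(\mathbf{1}_{X\setminus E}|E)=0$. A process of pavings is a family $(\mathcal{E}_t)_{t\ge0}$ with $\emptyset\in\mathcal{E}_t\subseteq\Sigma$ for all $t$; $\mathcal{E}_t^0=\mathcal{E}_t\setminus\{\emptyset\}$. A parametric family of CAOs (pFCA) $\{\mathsf{A}_t(\cdot|E)\colon E\in\mathcal{E}_t,\,t\ge0\}$ consists of CAOs $\mathsf{A}_t(\cdot|E)$ w.r.t. $E$ for each $t$ and $E\in\mathcal{E}_t^0$, with the convention $\mathsf{A}_t(\cdot|\emptyset)=\infty$. The generalized level measure is $\boldsymbol{\mu}_{\mathscr{A}}(f,t)=\sup\{\mu_t(E)\colon \mathsf{A}_t(f|E)\ge t,\ E\in\mathcal{E}_t\}$ for $t\ge0$. *)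

theory Defs
  imports "HOL-Analysis.Analysis"
begin

text \<open>The class F: measurable, nonnegative, bounded functions on X = space M.
  Functions are taken extensional (zero outside X), so that they represent maps X \<rightarrow> [0,\<infinity>).\<close>
definition F_class :: "'a measure \<Rightarrow> ('a \<Rightarrow> real) set" where
  "F_class M = {f. f \<in> borel_measurable M \<and> (\<forall>x\<in>space M. 0 \<le> f x)
                  \<and> bounded (f ` space M) \<and> (\<forall>x. x \<notin> space M \<longrightarrow> f x = 0)}"

definition monotone_measure :: "'a measure \<Rightarrow> ('a set \<Rightarrow> ennreal) \<Rightarrow> bool" where
  "monotone_measure M \<mu> \<longleftrightarrow>
     (\<forall>B\<in>sets M. \<forall>C\<in>sets M. B \<subseteq> C \<longrightarrow> \<mu> B \<le> \<mu> C) \<and> \<mu> {} = 0 \<and> \<mu> (space M) > 0"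

definition is_CAO :: "'a measure \<Rightarrow> 'a set \<Rightarrow> (('a \<Rightarrow> real) \<Rightarrow> ennreal) \<Rightarrow> bool" where
  "is_CAO M E A \<longleftrightarrow>
     (\<forall>f\<in>F_class M. \<forall>g\<in>F_class M. (\<forall>x\<in>E. f x \<le> g x) \<longrightarrow> A f \<le> A g) \<and>
     A (indicator (space M - E)) = 0"

definition process_of_pavings :: "'a measure \<Rightarrow> (real \<Rightarrow> 'a set set) \<Rightarrow> bool" where
  "process_of_pavings M \<E> \<longleftrightarrow> (\<forall>t\<ge>0. {} \<in> \<E> t \<and> \<E> t \<subseteq> sets M)"

text \<open>Parametric family of CAOs; A t E f stands for A_t(f|E).\<close>
definition is_pFCA :: "'a measure \<Rightarrow> (real \<Rightarrow> 'a set set)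
      \<Rightarrow> (real \<Rightarrow> 'a set \<Rightarrow> ('a \<Rightarrow> real) \<Rightarrow> ennreal) \<Rightarrow> bool" where
  "is_pFCA M \<E> A \<longleftrightarrow> (\<forall>t\<ge>0. \<forall>E\<in>\<E> t - {{}}. is_CAO M E (A t E))"

definition pFCA_val :: "(real \<Rightarrow> 'a set \<Rightarrow> ('a \<Rightarrow> real) \<Rightarrow> ennreal)
      \<Rightarrow> real \<Rightarrow> 'a set \<Rightarrow> ('a \<Rightarrow> real) \<Rightarrow> ennreal" where
  "pFCA_val A t E f = (if E = {} then \<infinity> else A t E f)"

definition gen_level_measure :: "(real \<Rightarrow> 'a set \<Rightarrow> ennreal) \<Rightarrow> (real \<Rightarrow> 'a set set)
      \<Rightarrow> (real \<Rightarrow> 'a set \<Rightarrow> ('a \<Rightarrow> real) \<Rightarrow> ennreal) \<Rightarrow> ('a \<Rightarrow> real) \<Rightarrow> real \<Rightarrow> ennreal" where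
  "gen_level_measure \<mu> \<E> A f t =
     Sup {\<mu> t E | E. E \<in> \<E> t \<and> ennreal t \<le> pFCA_val A t E f}"

end

theory Submission
  imports Defs
begin

lemma Sup_zero_iff_ennreal: "Sup S = (0::ennreal) \<longleftrightarrow> (\<forall>x\<in>S. x = 0)"
  by (metis Sup_le_iff bot.extremum_uniqueI bot_ennreal le_zero_eq)

theorem proposition3p7:
  fixes M :: "'a measure"
    and \<E> :: "real \<Rightarrow> 'a set set"
    and A :: "real \<Rightarrow> 'a set \<Rightarrow> ('a \<Rightarrow> real) \<Rightarrow> ennreal"
    and f :: "'a \<Rightarrow> real"
    and \<mu> :: "real \<Rightarrow> 'a set \<Rightarrow> ennreal"
  assumes "process_of_pavings M \<E>"
    and "is_pFCA M \<E> A"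
    and "f \<in> F_class M"
    and "\<forall>t\<ge>0. monotone_measure M (\<mu> t)"
  shows "(\<forall>t\<ge>0. gen_level_measure \<mu> \<E> A f t = 0 \<longleftrightarrow>
              (\<forall>E\<in>\<E> t - {{}}. ennreal t \<le> A t E f \<longrightarrow> \<mu> t E = 0))
       \<and> ((\<forall>t\<ge>0. \<forall>l\<ge>0. \<forall>E\<in>\<E> t - {{}}.
              A t E (\<lambda>x. l * indicator (space M) x) \<le> ennreal l)
          \<longrightarrow> (\<exists>b>0. \<forall>t>b. gen_level_measure \<mu> \<E> A f t = 0))"
proof
  have mu0: "\<mu> t {} = 0" if "t \<ge> 0" for t
    using assms(4) that unfolding monotone_measure_def by blast
  show "\<forall>t\<ge>0. gen_level_measure \<mu> \<E> A f t = 0 \<longleftrightarrow>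
              (\<forall>E\<in>\<E> t - {{}}. ennreal t \<le> A t E f \<longrightarrow> \<mu> t E = 0)"
    using mu0 unfolding gen_level_measure_def Sup_zero_iff_ennreal pFCA_val_def
    by auto
  show "(\<forall>t\<ge>0. \<forall>l\<ge>0. \<forall>E\<in>\<E> t - {{}}.
              A t E (\<lambda>x. l * indicator (space M) x) \<le> ennreal l)
          \<longrightarrow> (\<exists>b>0. \<forall>t>b. gen_level_measure \<mu> \<E> A f t = 0)"
  proof
    assume H: "\<forall>t\<ge>0. \<forall>l\<ge>0. \<forall>E\<in>\<E> t - {{}}.
              A t E (\<lambda>x. l * indicator (space M) x) \<le> ennreal l"
    have fF: "f \<in> borel_measurable M" "\<forall>x\<in>space M. 0 \<le> f x" "bounded (f ` space M)"
      "\<forall>x. x \<notin> space M \<longrightarrow> f x = 0"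
      using assms(3) unfolding F_class_def by auto
    obtain K where K: "\<forall>x\<in>space M. norm (f x) \<le> K"
      using fF(3) unfolding bounded_iff by auto
    define K' where "K' = max K 0"
    have K'0: "K' \<ge> 0" and K'f: "\<forall>x\<in>space M. f x \<le> K'"
      using K unfolding K'_def by auto
    define g where "g = (\<lambda>x. K' * indicator (space M) x :: real)"
    have gF: "g \<in> F_class M"
      unfolding F_class_def g_def
    proof (intro CollectI conjI ballI allI impI)
      show "(\<lambda>x. K' * indicator (space M) x) \<in> borel_measurable M"
        by (intro borel_measurable_times borel_measurable_const borel_measurable_indicator) simp
      show "bounded ((\<lambda>x. K' * indicator (space M) x) ` space M)"
        by (rule bounded_subset[of "{K'}"]) auto
    qed (auto simp: K'0)
    show "\<exists>b>0. \<forall>t>b. gen_level_measure \<mu> \<E> A f t = 0"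
    proof (intro exI[of _ "K' + 1"] conjI allI impI)
      show "K' + 1 > 0" using K'0 by simp
      fix t assume t: "t > K' + 1"
      have t0: "t \<ge> 0" using t K'0 by simp
      have "\<not> ennreal t \<le> A t E f" if E: "E \<in> \<E> t - {{}}" for E
      proof
        assume le: "ennreal t \<le> A t E f"
        have "E \<in> sets M" using assms(1) t0 E unfolding process_of_pavings_def by auto
        hence Esub: "E \<subseteq> space M" using sets.sets_into_space by blast
        have cao: "is_CAO M E (A t E)" using assms(2) t0 E unfolding is_pFCA_def by auto
        have "A t E f \<le> A t E g"
          using cao assms(3) gF Esub K'f unfolding is_CAO_def g_def by (auto simp: subset_iff)
        also have "\<dots> \<le> ennreal K'" using H t0 K'0 E unfolding g_def by auto
        finally have "ennreal t \<le> ennreal K'" using le by simp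
        thus False using t K'0 by (simp add: ennreal_le_iff)
      qed
      thus "gen_level_measure \<mu> \<E> A f t = 0"
        using mu0[OF t0] unfolding gen_level_measure_def Sup_zero_iff_ennreal pFCA_val_def
        by auto
    qed
  qed
qed

end
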